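(* Let $q$ be a prime power, let $\alpha$ be a primitive element of $\mathbb{F}_{q^n}$, and let $1\le t_1<\cdots<t_r<n$ be divisors of $n$ such that $t_i$ divides $t_{i+1}$ for $1\le i\le r-1$. Let $\mathcal{F}=(\mathbb{F}_{q^{t_1}},\ldots,\mathbb{F}_{q^{t_r}})$ be the Galois flag of this type on $\mathbb{F}_{q^n}$. Let $\beta\in\mathbb{F}_{q^n}^*$ with $\langle\beta\rangle=\langle\alpha^l\rangle$ for a divisor $l$ of $q^n-1$. For $1\le i\le r$ put $c_i=\frac{q^n-1}{q^{t_i}-1}$ and $l_i=\mathrm{lcm}(l,c_i)$. Then: (1) $d_f(\mathrm{Orb}_\beta(\mathcal{F}))=0$ if and only if $l_1=l_r=l$; (2) $d_f(\mathrm{Orb}_\beta(\mathcal{F}))=2\sum_{i=1}^r t_i$ if and only if $l_1=l_r\neq l$; (3) $d_f(\mathrm{Orb}_\beta(\mathcal{F}))=2\sum_{i=1}^{j-1}t_i$ if and only if $l_1\neq l_r$ and $j\in\{2,\ldots,r\}$ is the minimum index such that $l_1\neq l_j$.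
   Context: $\mathbb{F}_{q^n}$ is regarded as an $\mathbb{F}_q$-vector space. For $\gamma\in\mathbb{F}_{q^n}^*$, $\mathcal{U}\gamma=\{u\gamma:u\in\mathcal{U}\}$ and $\mathcal{F}\gamma=(\mathcal{F}_1\gamma,\ldots,\mathcal{F}_r\gamma)$. For $\beta$ of multiplicative order $|\beta|$, $\mathrm{Orb}_\beta(\mathcal{F})=\{\mathcal{F}\beta^j:0\le j\le|\beta|-1\}$. Subspace distance: $d_S(\mathcal{U},\mathcal{V})=\dim(\mathcal{U}+\mathcal{V})-\dim(\mathcal{U}\cap\mathcal{V})$; flag distance $d_f(\mathcal{F},\mathcal{F}')=\sum_{i=1}^r d_S(\mathcal{F}_i,\mathcal{F}'_i)$. The minimum distance $d_f(\mathcal{C})$ of a set of flags is the minimum flag distance between distinct elements, and $0$ if $|\mathcal{C}|=1$. *)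

theory Defs
  imports "HOL-Computational_Algebra.Primes"
begin

definition prime_power :: "nat \<Rightarrow> bool" where
  "prime_power q \<longleftrightarrow> (\<exists>p k. prime (p::nat) \<and> k \<ge> 1 \<and> q = p ^ k)"

(* The subfield F_{q^t} of a finite field, as the fixed points of x \<mapsto> x^(q^t) *)
definition subfield_pow :: "nat \<Rightarrow> 'a::field set" where
  "subfield_pow m = {x. x ^ m = x}"

definition mord :: "'a::field \<Rightarrow> nat" where
  "mord x = (LEAST k. k > 0 \<and> x ^ k = 1)"

definition cyc :: "'a::field \<Rightarrow> 'a set" where
  "cyc x = {x ^ k | k. True}"

definition primitive_elem :: "'a::{finite,field} \<Rightarrow> bool" where
  "primitive_elem a \<longleftrightarrow> cyc a = UNIV - {0}"

definition lin_indep_over :: "'a::field set \<Rightarrow> 'a set \<Rightarrow> bool" where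
  "lin_indep_over K S \<longleftrightarrow> finite S \<and>
     (\<forall>c. (\<forall>s\<in>S. c s \<in> K) \<longrightarrow> (\<Sum>s\<in>S. c s * s) = 0 \<longrightarrow> (\<forall>s\<in>S. c s = 0))"

definition dim_over :: "'a::{finite,field} set \<Rightarrow> 'a set \<Rightarrow> nat" where
  "dim_over K U = Max (card ` {S. S \<subseteq> U \<and> lin_indep_over K S})"

definition sub_sum :: "'a::field set \<Rightarrow> 'a set \<Rightarrow> 'a set" where
  "sub_sum U V = {u + v | u v. u \<in> U \<and> v \<in> V}"

definition subspace_dist :: "'a::{finite,field} set \<Rightarrow> 'a set \<Rightarrow> 'a set \<Rightarrow> nat" where
  "subspace_dist K U V = dim_over K (sub_sum U V) - dim_over K (U \<inter> V)"

definition flag_dist :: "'a::{finite,field} set \<Rightarrow> 'a set list \<Rightarrow> 'a set list \<Rightarrow> nat" where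
  "flag_dist K F G = (\<Sum>i<length F. subspace_dist K (F ! i) (G ! i))"

definition flag_scale :: "'a set list \<Rightarrow> 'a::field \<Rightarrow> 'a set list" where
  "flag_scale F g = map (\<lambda>U. (\<lambda>u. u * g) ` U) F"

definition orbit_flag :: "'a::field \<Rightarrow> 'a set list \<Rightarrow> 'a set list set" where
  "orbit_flag b F = {flag_scale F (b ^ j) | j. j \<le> mord b - 1}"

definition min_flag_dist :: "'a::{finite,field} set \<Rightarrow> 'a set list set \<Rightarrow> nat" where
  "min_flag_dist K C = (if card C = 1 then 0
      else Min {flag_dist K A B | A B. A \<in> C \<and> B \<in> C \<and> A \<noteq> B})"

end

theory Submission
  imports Defs "HOL-Number_Theory.Residues" "HOL-Library.FuncSet"
begin

lemma fermat_fin: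
  fixes x :: "'a::{finite,field}"
  assumes "x \<noteq> 0"
  shows "x ^ (card (UNIV::'a set) - 1) = 1"
proof -
  have "(\<Prod>y\<in>UNIV-{0}. x * y) = x ^ (card (UNIV::'a set) - 1) * \<Prod>(UNIV-{0::'a})"
    by (simp add: prod.distrib)
  moreover have "(\<Prod>y\<in>UNIV-{0}. x * y) = (\<Prod>y\<in>UNIV-{0::'a}. y)"
    by (rule prod.reindex_bij_witness[of _ "\<lambda>y. y / x" "\<lambda>y. x * y"]) (use assms in auto)
  moreover have "\<Prod>(UNIV-{0::'a}) \<noteq> 0" by simp
  ultimately show ?thesis by simp
qed

lemma char_eq:
  assumes "prime p" "card (UNIV::'a::{finite,field} set) = p ^ e"
  shows "CHAR('a) = p"
proof -
  have pc: "prime CHAR('a)"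
    by (intro prime_CHAR_semidom finite_imp_CHAR_pos) simp
  have "CHAR('a) dvd p ^ e" using CHAR_dvd_CARD[where 'a='a] assms by simp
  hence "CHAR('a) dvd p" using pc prime_dvd_power by blast
  thus ?thesis using pc assms(1) by (simp add: primes_dvd_imp_eq)
qed

lemma frob_add:
  fixes x y :: "'a::{finite,field}"
  assumes "CHAR('a) = p" "prime p"
  shows "(x + y) ^ (p ^ j) = x ^ (p ^ j) + y ^ (p ^ j)"
  by (rule freshmans_dream') (use assms in auto)

lemma frob_neg:
  fixes x :: "'a::{finite,field}"
  assumes "CHAR('a) = p" "prime p"
  shows "(- x) ^ (p ^ j) = - (x ^ (p ^ j))"
proof (induction j)
  case (Suc j)
  have "(- x) ^ (p ^ Suc j) = ((- x) ^ (p ^ j)) ^ p"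
    by (simp add: power_mult[symmetric] mult.commute)
  also have "\<dots> = (- (x ^ (p ^ j))) ^ p" using Suc by simp
  also have "\<dots> = - ((x ^ (p ^ j)) ^ p)" by (rule minus_power_prime_CHAR) (use assms in auto)
  also have "\<dots> = - (x ^ (p ^ Suc j))" by (simp add: power_mult[symmetric] mult.commute)
  finally show ?case .
qed simp

context
  fixes p j :: nat
  assumes chp: "CHAR('a::{finite,field}) = p" and pp: "prime p"
begin

lemma sp_add: "(x::'a) \<in> subfield_pow (p^j) \<Longrightarrow> y \<in> subfield_pow (p^j) \<Longrightarrow> x + y \<in> subfield_pow (p^j)"
  unfolding subfield_pow_def using frob_add[OF chp pp] by auto

lemma sp_neg: "(x::'a) \<in> subfield_pow (p^j) \<Longrightarrow> - x \<in> subfield_pow (p^j)"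
  unfolding subfield_pow_def using frob_neg[OF chp pp] by auto

lemma sp_diff: "(x::'a) \<in> subfield_pow (p^j) \<Longrightarrow> y \<in> subfield_pow (p^j) \<Longrightarrow> x - y \<in> subfield_pow (p^j)"
  using sp_add[of x "-y"] sp_neg[of y] by simp

end

lemma sp_mult: "(x::'a::field) \<in> subfield_pow m \<Longrightarrow> y \<in> subfield_pow m \<Longrightarrow> x * y \<in> subfield_pow m"
  unfolding subfield_pow_def by (simp add: power_mult_distrib)

lemma sp_div: "(x::'a::field) \<in> subfield_pow m \<Longrightarrow> y \<in> subfield_pow m \<Longrightarrow> x / y \<in> subfield_pow m"
  unfolding subfield_pow_def by (simp add: power_divide)

lemma sp_0: "m > 0 \<Longrightarrow> (0::'a::field) \<in> subfield_pow m"
  unfolding subfield_pow_def by simp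

lemma sp_1: "(1::'a::field) \<in> subfield_pow m"
  unfolding subfield_pow_def by simp

lemma sp_pow_mono: "(x::'a::field) \<in> subfield_pow m \<Longrightarrow> x \<in> subfield_pow (m ^ s)"
  unfolding subfield_pow_def
proof (induction s)
  case (Suc s)
  then have "x ^ (m ^ Suc s) = (x ^ m) ^ (m ^ s)" by (simp add: power_mult)
  then show ?case using Suc by simp
qed simp


definition subsp :: "'a::field set \<Rightarrow> 'a set \<Rightarrow> bool" where
  "subsp K U \<longleftrightarrow> 0 \<in> U \<and> (\<forall>u\<in>U. \<forall>v\<in>U. u + v \<in> U) \<and> (\<forall>c\<in>K. \<forall>u\<in>U. c * u \<in> U)"

context
  fixes K :: "'a::{finite,field} set"
  assumes K0: "0 \<in> K" and K1: "1 \<in> K"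
    and Kdiff: "\<And>x y. x \<in> K \<Longrightarrow> y \<in> K \<Longrightarrow> x - y \<in> K"
    and Kmult: "\<And>x y. x \<in> K \<Longrightarrow> y \<in> K \<Longrightarrow> x * y \<in> K"
    and Kdiv: "\<And>x y. x \<in> K \<Longrightarrow> y \<in> K \<Longrightarrow> x / y \<in> K"
begin

lemma Kneg: "x \<in> K \<Longrightarrow> - x \<in> K"
  using Kdiff[OF K0, of x] by simp

lemma sum_in_subsp:
  assumes "subsp K U" "finite S" "S \<subseteq> U" "\<forall>s\<in>S. c s \<in> K"
  shows "(\<Sum>s\<in>S. c s * s) \<in> U"
  using assms(2,3,4)
proof (induction S rule: finite_induct)
  case empty then show ?case using assms(1) by (simp add: subsp_def)
next
  case (insert x F)
  then show ?case using assms(1) unfolding subsp_def by simp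
qed

lemma indep_card_le:
  assumes "subsp K U" "S \<subseteq> U" "lin_indep_over K S"
  shows "card K ^ card S \<le> card U"
proof -
  have fS: "finite S" using assms(3) by (simp add: lin_indep_over_def)
  define \<Phi> where "\<Phi> = (\<lambda>c. \<Sum>s\<in>S. c s * s)"
  have inj: "inj_on \<Phi> (S \<rightarrow>\<^sub>E K)"
  proof (rule inj_onI)
    fix c c' assume c: "c \<in> S \<rightarrow>\<^sub>E K" and c': "c' \<in> S \<rightarrow>\<^sub>E K" and e: "\<Phi> c = \<Phi> c'"
    have "(\<Sum>s\<in>S. (c s - c' s) * s) = \<Phi> c - \<Phi> c'"
      unfolding \<Phi>_def by (simp add: sum_subtractf left_diff_distrib)
    also have "\<dots> = 0" using e by simp
    finally have "(\<Sum>s\<in>S. (c s - c' s) * s) = 0" .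
    moreover have "\<forall>s\<in>S. c s - c' s \<in> K" using c c' Kdiff by auto
    moreover have H: "\<forall>c. (\<forall>s\<in>S. c s \<in> K) \<longrightarrow> (\<Sum>s\<in>S. c s * s) = 0 \<longrightarrow> (\<forall>s\<in>S. c s = 0)"
      using assms(3) unfolding lin_indep_over_def by blast
    ultimately have "\<forall>s\<in>S. c s - c' s = 0"
      using H[rule_format, of "\<lambda>s. c s - c' s"] by blast
    then show "c = c'" using c c' by (intro extensionalityI[of _ S]) (auto simp: PiE_def)
  qed
  have sub: "\<Phi> ` (S \<rightarrow>\<^sub>E K) \<subseteq> U"
    unfolding \<Phi>_def using sum_in_subsp[OF assms(1) fS assms(2)] by auto
  have "card (S \<rightarrow>\<^sub>E K) \<le> card U"
    using card_inj_on_le[OF inj sub] by simp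
  then show ?thesis using card_funcsetE[OF fS, of K] by simp
qed

lemma exists_spanning:
  assumes "subsp K U"
  shows "\<exists>S \<subseteq> U. lin_indep_over K S \<and> card U \<le> card K ^ card S"
proof -
  define Ind where "Ind = {S. S \<subseteq> U \<and> lin_indep_over K S}"
  have "{} \<in> Ind" unfolding Ind_def lin_indep_over_def by simp
  have fI: "finite Ind" by simp
  define M where "M = Max (card ` Ind)"
  have "M \<in> card ` Ind" unfolding M_def using fI \<open>{} \<in> Ind\<close> by (intro Max_in) auto
  then obtain S where S: "S \<in> Ind" "card S = M" by auto
  have maxS: "card S' \<le> M" if "S' \<in> Ind" for S'
    unfolding M_def using fI that by (intro Max_ge) auto
  have SU: "S \<subseteq> U" and iS: "lin_indep_over K S" using S(1) by (auto simp: Ind_def)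
  have fS: "finite S" using iS by (simp add: lin_indep_over_def)
  define \<Phi> where "\<Phi> = (\<lambda>c. \<Sum>s\<in>S. c s * s)"
  have span: "U \<subseteq> \<Phi> ` (S \<rightarrow>\<^sub>E K)"
  proof
    fix u assume uU: "u \<in> U"
    show "u \<in> \<Phi> ` (S \<rightarrow>\<^sub>E K)"
    proof (cases "u \<in> S")
      case True
      define c where "c = restrict (\<lambda>s. if s = u then (1::'a) else 0) S"
      have "c \<in> S \<rightarrow>\<^sub>E K" unfolding c_def using K0 K1 by auto
      moreover have "\<Phi> c = u"
      proof -
        have "\<Phi> c = (\<Sum>s\<in>S. (if s = u then 1 else 0) * s)"
          unfolding \<Phi>_def c_def by (intro sum.cong) auto
        also have "\<dots> = (\<Sum>s\<in>S. if s = u then s else 0)" by (intro sum.cong) auto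
        also have "\<dots> = u" using True fS by simp
        finally show ?thesis .
      qed
      ultimately show ?thesis by force
    next
      case False
      have "insert u S \<notin> Ind"
      proof
        assume "insert u S \<in> Ind"
        then have "card (insert u S) \<le> M" by (rule maxS)
        then show False using False fS S(2) by simp
      qed
      then have "\<not> lin_indep_over K (insert u S)" using SU uU by (auto simp: Ind_def)
      then obtain c where cK: "\<forall>s\<in>insert u S. c s \<in> K"
        and c0: "(\<Sum>s\<in>insert u S. c s * s) = 0" and nz: "\<exists>s\<in>insert u S. c s \<noteq> 0"
        using fS unfolding lin_indep_over_def by auto
      have csum: "c u * u + (\<Sum>s\<in>S. c s * s) = 0" using c0 False fS by simp
      have cu: "c u \<noteq> 0"
      proof
        assume "c u = 0"
        then have "(\<Sum>s\<in>S. c s * s) = 0" using csum by simp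
        then have "\<forall>s\<in>S. c s = 0" using iS cK unfolding lin_indep_over_def by blast
        then show False using nz \<open>c u = 0\<close> by auto
      qed
      define f where "f = restrict (\<lambda>s. - c s / c u) S"
      have "f \<in> S \<rightarrow>\<^sub>E K" unfolding f_def using cK Kdiv Kneg by auto
      moreover have "\<Phi> f = u"
      proof -
        have "\<Phi> f = (\<Sum>s\<in>S. (- c s / c u) * s)"
          unfolding \<Phi>_def f_def by (intro sum.cong) auto
        also have "\<dots> = - (\<Sum>s\<in>S. c s * s) / c u"
          by (simp add: sum_divide_distrib sum_negf)
        also have "- (\<Sum>s\<in>S. c s * s) = c u * u" using csum by (simp add: add_eq_0_iff2 add.commute)
        then have "- (\<Sum>s\<in>S. c s * s) / c u = (c u * u) / c u" by simp
        also have "\<dots> = u" using cu by simp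
        finally show ?thesis .
      qed
      ultimately show ?thesis by force
    qed
  qed
  have "card U \<le> card (\<Phi> ` (S \<rightarrow>\<^sub>E K))" using span by (intro card_mono) auto
  also have "\<dots> \<le> card (S \<rightarrow>\<^sub>E K)" by (rule card_image_le) (simp add: fS finite_PiE)
  also have "\<dots> = card K ^ card S" by (rule card_funcsetE[OF fS])
  finally show ?thesis using SU iS by blast
qed

lemma dim_over_eq:
  assumes "subsp K U" "card U = card K ^ m" "card K > 1"
  shows "dim_over K U = m"
proof -
  define Ind where "Ind = {S. S \<subseteq> U \<and> lin_indep_over K S}"
  have fI: "finite (card ` Ind)" by simp
  have le: "x \<le> m" if "x \<in> card ` Ind" for x
  proof -
    from that obtain S where "S \<in> Ind" "x = card S" by auto
    then have "card K ^ x \<le> card K ^ m" using indep_card_le[OF assms(1)] assms(2) by (auto simp: Ind_def)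
    then show ?thesis using assms(3) by simp
  qed
  obtain S where S: "S \<subseteq> U" "lin_indep_over K S" "card U \<le> card K ^ card S"
    using exists_spanning[OF assms(1)] by blast
  have "m \<le> card S" using S(3) assms(2,3) by simp
  moreover have "card S \<in> card ` Ind" using S by (auto simp: Ind_def)
  ultimately have "m \<in> card ` Ind" using le by (metis le_antisym)
  then have "Max (card ` Ind) = m" using le fI by (intro Max_eqI) auto
  then show ?thesis unfolding dim_over_def Ind_def .
qed

end


lemma pow_sub1_dvd:
  fixes x :: nat
  assumes "x \<ge> 1"
  shows "x ^ a - 1 dvd x ^ (a * s) - 1"
proof (induction s)
  case (Suc s)
  have p1: "x ^ a \<ge> 1" "x ^ (a * s) \<ge> 1" using assms by auto
  have gen: "A * B - 1 = A * (B - 1) + (A - 1)" if "A \<ge> 1" "B \<ge> 1" for A B :: nat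
    using that by (cases B) (auto simp: algebra_simps)
  have "x ^ (a * Suc s) - 1 = x ^ a * (x ^ (a * s) - 1) + (x ^ a - 1)"
    using gen[OF p1] by (simp add: power_add)
  then show ?case using Suc by simp
qed simp

lemma pow_sub1_dvd':
  fixes x :: nat
  assumes "x \<ge> 1" "a dvd b"
  shows "x ^ a - 1 dvd x ^ b - 1"
  using pow_sub1_dvd[OF assms(1), of a "b div a"] assms(2) by simp

context
  fixes \<alpha> :: "'a::{finite,field}" and N :: nat
  assumes N_def: "N = card (UNIV::'a set) - 1" and prim: "primitive_elem \<alpha>"
begin

lemma alpha_ne0: "\<alpha> \<noteq> 0"
proof -
  have "\<alpha> \<in> cyc \<alpha>" unfolding cyc_def by (auto intro: exI[of _ 1])
  then show ?thesis using prim unfolding primitive_elem_def by auto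
qed

lemma cardN: "card (UNIV - {0::'a}) = N" using N_def by (simp add: card_Diff_singleton)

lemma Npos: "N > 0"
proof -
  have "{0::'a, 1} \<subseteq> UNIV" by simp
  then have "card {0::'a,1} \<le> card (UNIV::'a set)" by (intro card_mono) auto
  then show ?thesis using N_def by simp
qed

lemma alpha_N: "\<alpha> ^ N = 1" using fermat_fin[OF alpha_ne0] N_def by simp

lemma alpha_pow_mod: "\<alpha> ^ a = \<alpha> ^ (a mod N)"
proof -
  have "\<alpha> ^ a = \<alpha> ^ (N * (a div N) + a mod N)" by simp
  also have "\<dots> = \<alpha> ^ (a mod N)" by (simp only: power_add power_mult alpha_N power_one mult_1)
  finally show ?thesis .
qed

lemma alpha_img: "(\<lambda>k. \<alpha> ^ k) ` {..<N} = UNIV - {0}"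
proof -
  have "(\<lambda>k. \<alpha> ^ k) ` {..<N} = cyc \<alpha>"
  proof
    show "(\<lambda>k. \<alpha> ^ k) ` {..<N} \<subseteq> cyc \<alpha>" unfolding cyc_def by auto
    show "cyc \<alpha> \<subseteq> (\<lambda>k. \<alpha> ^ k) ` {..<N}"
    proof
      fix x assume "x \<in> cyc \<alpha>"
      then obtain k where "x = \<alpha> ^ k" unfolding cyc_def by auto
      then have "x = \<alpha> ^ (k mod N)" using alpha_pow_mod by simp
      moreover have "k mod N < N" using Npos by simp
      ultimately show "x \<in> (\<lambda>k. \<alpha> ^ k) ` {..<N}" by auto
    qed
  qed
  then show ?thesis using prim unfolding primitive_elem_def by simp
qed

lemma alpha_inj: "inj_on (\<lambda>k. \<alpha> ^ k) {..<N}"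
  by (rule eq_card_imp_inj_on) (use alpha_img cardN in simp_all)

lemma alpha_eq: "\<alpha> ^ a = \<alpha> ^ b \<longleftrightarrow> a mod N = b mod N"
proof
  assume "\<alpha> ^ a = \<alpha> ^ b"
  then have "\<alpha> ^ (a mod N) = \<alpha> ^ (b mod N)" using alpha_pow_mod by metis
  then show "a mod N = b mod N" using alpha_inj Npos by (auto dest: inj_onD)
next
  assume "a mod N = b mod N"
  then show "\<alpha> ^ a = \<alpha> ^ b" using alpha_pow_mod by metis
qed

lemma alpha_eq1: "\<alpha> ^ a = 1 \<longleftrightarrow> N dvd a"
  using alpha_eq[of a 0] by (simp add: mod_eq_0_iff_dvd)

lemma alpha_surj: "x \<noteq> 0 \<Longrightarrow> \<exists>k. x = \<alpha> ^ k"
  using alpha_img by (metis (mono_tags, lifting) DiffI UNIV_I imageE singletonD)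

context
  fixes q n t :: nat
  assumes card_q: "card (UNIV::'a set) = q ^ n" and tn: "t dvd n" and q2: "q \<ge> 2"
begin

lemma N_eq: "N = q ^ n - 1" using N_def card_q by simp

lemma qt_dvd: "q ^ t - 1 dvd N"
  using pow_sub1_dvd'[of q t n] q2 tn N_eq by simp

lemma qt_pos: "t \<ge> 1 \<Longrightarrow> q ^ t - 1 > 0"
proof -
  assume "t \<ge> 1"
  then have "q ^ t \<ge> q ^ 1" using q2 by (intro power_increasing) auto
  then show ?thesis using q2 by simp
qed

lemma N_fact: "N = (N div (q ^ t - 1)) * (q ^ t - 1)"
  using qt_dvd by simp

lemma mem_F:
  assumes "t \<ge> 1"
  shows "\<alpha> ^ k \<in> subfield_pow (q ^ t) \<longleftrightarrow> (N div (q ^ t - 1)) dvd k"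
proof -
  define c where "c = N div (q ^ t - 1)"
  have qt1: "k * q ^ t = k * (q ^ t - 1) + k" using qt_pos[OF assms]
    by (simp add: diff_mult_distrib2)
  have "(\<alpha> ^ k) ^ (q ^ t) = \<alpha> ^ (k * (q ^ t - 1)) * \<alpha> ^ k"
    by (simp only: power_mult[symmetric] qt1 power_add)
  then have "\<alpha> ^ k \<in> subfield_pow (q ^ t) \<longleftrightarrow> \<alpha> ^ (k * (q ^ t - 1)) * \<alpha> ^ k = \<alpha> ^ k"
    unfolding subfield_pow_def by simp
  also have "\<dots> \<longleftrightarrow> \<alpha> ^ (k * (q ^ t - 1)) = 1"
    using alpha_ne0 by (simp add: mult_cancel_right2)
  also have "\<dots> \<longleftrightarrow> c * (q ^ t - 1) dvd k * (q ^ t - 1)"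
    unfolding alpha_eq1 c_def using N_fact by simp
  also have "\<dots> \<longleftrightarrow> c dvd k" using qt_pos[OF assms] by simp
  finally show ?thesis unfolding c_def .
qed

lemma card_F:
  assumes "t \<ge> 1"
  shows "card (subfield_pow (q ^ t) :: 'a set) = q ^ t"
proof -
  define c where "c = N div (q ^ t - 1)"
  have Nc: "N = c * (q ^ t - 1)" using N_fact c_def by simp
  have cpos: "c > 0" using Nc Npos by (cases c) auto
  have memc: "\<alpha> ^ k \<in> subfield_pow (q ^ t) \<longleftrightarrow> c dvd k" for k
    using mem_F[OF assms] unfolding c_def .
  have qpos: "q ^ t > 0" using q2 by simp
  have eq: "(subfield_pow (q ^ t) :: 'a set) = insert 0 ((\<lambda>j. \<alpha> ^ (c * j)) ` {..<q ^ t - 1})"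
  proof
    have "\<alpha> ^ (c * j) \<in> subfield_pow (q ^ t)" for j using memc[of "c * j"] by simp
    moreover have "(0::'a) \<in> subfield_pow (q ^ t)" using sp_0[OF qpos] .
    ultimately show "insert 0 ((\<lambda>j. \<alpha> ^ (c * j)) ` {..<q ^ t - 1}) \<subseteq> subfield_pow (q ^ t)"
      by blast
    show "subfield_pow (q ^ t) \<subseteq> insert 0 ((\<lambda>j. \<alpha> ^ (c * j)) ` {..<q ^ t - 1})"
    proof
      fix x :: 'a assume xF: "x \<in> subfield_pow (q ^ t)"
      show "x \<in> insert 0 ((\<lambda>j. \<alpha> ^ (c * j)) ` {..<q ^ t - 1})"
      proof (cases "x = 0")
        case False
        then obtain k where xk: "x = \<alpha> ^ k" using alpha_surj by blast
        then have "c dvd k" using xF memc by simp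
        moreover have "c dvd N" using Nc by simp
        ultimately have "c dvd k mod N" by (simp add: dvd_mod)
        then obtain j where j: "k mod N = c * j" by blast
        have "k mod N < N" using Npos by (rule mod_less_divisor)
        then have "c * j < c * (q ^ t - 1)" using j Nc by simp
        then have "j < q ^ t - 1" by simp
        moreover have "x = \<alpha> ^ (c * j)" using xk alpha_pow_mod[of k] j by simp
        ultimately show ?thesis by blast
      qed simp
    qed
  qed
  have inj: "inj_on (\<lambda>j. \<alpha> ^ (c * j)) {..<q ^ t - 1}"
  proof (rule inj_onI)
    fix i j assume i: "i \<in> {..<q ^ t - 1}" and j: "j \<in> {..<q ^ t - 1}"
      and e: "\<alpha> ^ (c * i) = \<alpha> ^ (c * j)"
    have "c * i < N" "c * j < N" using i j Nc cpos by auto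
    then have "c * i = c * j" using e alpha_eq[of "c * i" "c * j"] by simp
    then show "i = j" using cpos by simp
  qed
  have "0 \<notin> (\<lambda>j. \<alpha> ^ (c * j)) ` {..<q ^ t - 1}" using alpha_ne0 by auto
  then have "card (subfield_pow (q ^ t) :: 'a set) = Suc (q ^ t - 1)"
    unfolding eq using card_image[OF inj] by simp
  then show ?thesis using qt_pos[OF assms] by simp
qed

end

end


context
  fixes K :: "'a::{finite,field} set"
  assumes K0: "0 \<in> K" and K1: "1 \<in> K"
    and Kdiff: "\<And>x y. x \<in> K \<Longrightarrow> y \<in> K \<Longrightarrow> x - y \<in> K"
    and Kmult: "\<And>x y. x \<in> K \<Longrightarrow> y \<in> K \<Longrightarrow> x * y \<in> K"
    and Kdiv: "\<And>x y. x \<in> K \<Longrightarrow> y \<in> K \<Longrightarrow> x / y \<in> K"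
    and Kcard: "card K > 1"
begin

lemma dim_zero: "dim_over K {0} = 0"
  by (rule dim_over_eq[OF K0 K1 Kdiff Kmult Kdiv]) (use Kcard in \<open>auto simp: subsp_def\<close>)

lemma dist_self:
  assumes "subsp K V"
  shows "subspace_dist K V V = 0"
proof -
  have "sub_sum V V = V"
  proof
    show "sub_sum V V \<subseteq> V" using assms unfolding sub_sum_def subsp_def by auto
    show "V \<subseteq> sub_sum V V"
    proof
      fix v assume "v \<in> V"
      then have "v = v + 0 \<and> v \<in> V \<and> 0 \<in> V" using assms by (simp add: subsp_def)
      then show "v \<in> sub_sum V V" unfolding sub_sum_def by blast
    qed
  qed
  then show ?thesis unfolding subspace_dist_def by simp
qed

context
  fixes F :: "'a set" and t :: nat
  assumes F0: "0 \<in> F" and F1: "1 \<in> F"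
    and Fadd: "\<And>x y. x \<in> F \<Longrightarrow> y \<in> F \<Longrightarrow> x + y \<in> F"
    and Fdiff: "\<And>x y. x \<in> F \<Longrightarrow> y \<in> F \<Longrightarrow> x - y \<in> F"
    and Fmult: "\<And>x y. x \<in> F \<Longrightarrow> y \<in> F \<Longrightarrow> x * y \<in> F"
    and Fdiv: "\<And>x y. x \<in> F \<Longrightarrow> y \<in> F \<Longrightarrow> x / y \<in> F"
    and KF: "K \<subseteq> F"
    and Fcard: "card F = card K ^ t"
begin

lemma scaled_subsp: "subsp K ((\<lambda>u. u * g) ` F)"
  unfolding subsp_def
proof (intro conjI ballI)
  show "0 \<in> (\<lambda>u. u * g) ` F" using F0 by force
next
  fix x y assume "x \<in> (\<lambda>u. u * g) ` F" "y \<in> (\<lambda>u. u * g) ` F"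
  then obtain u v where "u \<in> F" "v \<in> F" "x = u * g" "y = v * g" by auto
  then show "x + y \<in> (\<lambda>u. u * g) ` F"
    using Fadd by (auto simp: distrib_right intro!: image_eqI[of _ _ "u + v"])
next
  fix c x assume "c \<in> K" "x \<in> (\<lambda>u. u * g) ` F"
  then obtain u where "u \<in> F" "x = u * g" by auto
  then show "c * x \<in> (\<lambda>u. u * g) ` F"
    using Fmult \<open>c \<in> K\<close> KF by (auto simp: mult.assoc intro!: image_eqI[of _ _ "c * u"])
qed

lemma scaled_eq_iff:
  assumes "g \<noteq> 0" "g' \<noteq> 0"
  shows "(\<lambda>u. u * g) ` F = (\<lambda>u. u * g') ` F \<longleftrightarrow> g' / g \<in> F"
proof
  assume e: "(\<lambda>u. u * g) ` F = (\<lambda>u. u * g') ` F"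
  have "1 * g' \<in> (\<lambda>u. u * g') ` F" using F1 by blast
  then have "g' \<in> (\<lambda>u. u * g) ` F" using e by simp
  then obtain u where "u \<in> F" "g' = u * g" by auto
  then show "g' / g \<in> F" using assms by simp
next
  assume d: "g' / g \<in> F"
  have dz: "g' / g \<noteq> 0" using assms by simp
  show "(\<lambda>u. u * g) ` F = (\<lambda>u. u * g') ` F"
  proof
    show "(\<lambda>u. u * g) ` F \<subseteq> (\<lambda>u. u * g') ` F"
    proof
      fix x assume "x \<in> (\<lambda>u. u * g) ` F"
      then obtain u where u: "u \<in> F" "x = u * g" by auto
      have "x = (u / (g' / g)) * g'" using u assms by (simp add: field_simps)
      moreover have "u / (g' / g) \<in> F" using Fdiv u d by blast
      ultimately show "x \<in> (\<lambda>u. u * g') ` F" by blast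
    qed
    show "(\<lambda>u. u * g') ` F \<subseteq> (\<lambda>u. u * g) ` F"
    proof
      fix x assume "x \<in> (\<lambda>u. u * g') ` F"
      then obtain u where u: "u \<in> F" "x = u * g'" by auto
      have "x = (u * (g' / g)) * g" using u assms by (simp add: field_simps)
      moreover have "u * (g' / g) \<in> F" using Fmult u d by blast
      ultimately show "x \<in> (\<lambda>u. u * g) ` F" by blast
    qed
  qed
qed

lemma scaled_dist:
  assumes "g \<noteq> 0" "g' \<noteq> 0"
  shows "subspace_dist K ((\<lambda>u. u * g) ` F) ((\<lambda>u. u * g') ` F) = (if g' / g \<in> F then 0 else 2 * t)"
proof (cases "g' / g \<in> F")
  case True
  then show ?thesis using scaled_eq_iff[OF assms] dist_self[OF scaled_subsp] by simp
next
  case False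
  let ?U = "(\<lambda>u. u * g) ` F" and ?V = "(\<lambda>u. u * g') ` F"
  have int: "?U \<inter> ?V = {0}"
  proof
    show "{0} \<subseteq> ?U \<inter> ?V" using F0 by force
    show "?U \<inter> ?V \<subseteq> {0}"
    proof
      fix x assume "x \<in> ?U \<inter> ?V"
      then obtain u v where uv: "u \<in> F" "v \<in> F" "x = u * g" "x = v * g'" by blast
      show "x \<in> {0}"
      proof (cases "v = 0")
        case False
        then have "g' / g = u / v" using uv assms by (simp add: field_simps)
        then have "g' / g \<in> F" using Fdiv uv by simp
        then show ?thesis using \<open>g' / g \<notin> F\<close> by blast
      qed (use uv in simp)
    qed
  qed
  have ss: "sub_sum ?U ?V = (\<lambda>(u, v). u * g + v * g') ` (F \<times> F)"
    unfolding sub_sum_def by auto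
  have inj: "inj_on (\<lambda>(u, v). u * g + v * g') (F \<times> F)"
  proof (rule inj_onI, clarsimp)
    fix u v u' v' assume uv: "u \<in> F" "v \<in> F" "u' \<in> F" "v' \<in> F"
      and e: "u * g + v * g' = u' * g + v' * g'"
    have e2: "(u - u') * g = (v' - v) * g'" using e by (simp add: algebra_simps)
    show "u = u' \<and> v = v'"
    proof (cases "v' = v")
      case True
      then show ?thesis using e2 assms by simp
    next
      case False
      then have "g' / g = (u - u') / (v' - v)" using e2 assms by (simp add: field_simps)
      then have "g' / g \<in> F" using Fdiv Fdiff uv by simp
      then show ?thesis using \<open>g' / g \<notin> F\<close> by blast
    qed
  qed
  have cs: "card (sub_sum ?U ?V) = card K ^ (2 * t)"
    unfolding ss card_image[OF inj] card_cartesian_product Fcard by (simp add: power_add mult_2)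
  have subs: "subsp K (sub_sum ?U ?V)"
    unfolding subsp_def
  proof (intro conjI ballI)
    show "0 \<in> sub_sum ?U ?V" using F0 unfolding sub_sum_def by force
  next
    fix x y assume "x \<in> sub_sum ?U ?V" "y \<in> sub_sum ?U ?V"
    then obtain a b c d where "a \<in> ?U" "b \<in> ?V" "c \<in> ?U" "d \<in> ?V" "x = a + b" "y = c + d"
      unfolding sub_sum_def by blast
    moreover have "a + c \<in> ?U" "b + d \<in> ?V"
      using scaled_subsp[of g] scaled_subsp[of g'] calculation unfolding subsp_def by blast+
    moreover have "x + y = (a + c) + (b + d)" using calculation by (simp add: algebra_simps)
    ultimately show "x + y \<in> sub_sum ?U ?V" unfolding sub_sum_def by blast
  next
    fix c x assume cK: "c \<in> K" and "x \<in> sub_sum ?U ?V"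
    then obtain a b where ab: "a \<in> ?U" "b \<in> ?V" "x = a + b"
      unfolding sub_sum_def by blast
    moreover have "c * a \<in> ?U" "c * b \<in> ?V"
      using scaled_subsp[of g] scaled_subsp[of g'] ab cK unfolding subsp_def by blast+
    moreover have "c * x = c * a + c * b" using ab by (simp add: algebra_simps)
    ultimately show "c * x \<in> sub_sum ?U ?V" unfolding sub_sum_def by blast
  qed
  have "dim_over K (sub_sum ?U ?V) = 2 * t"
    by (rule dim_over_eq[OF K0 K1 Kdiff Kmult Kdiv subs cs Kcard])
  then show ?thesis unfolding subspace_dist_def int dim_zero using False by simp
qed

end

end


lemma chain_ind:
  assumes "P 1" "\<And>i. i \<in> {1..<r} \<Longrightarrow> P i \<Longrightarrow> P (Suc i)"
  shows "i \<in> {1..r} \<Longrightarrow> P i"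
proof (induction i)
  case (Suc i)
  show ?case
  proof (cases "i = 0")
    case False
    then have "i \<in> {1..<r}" using Suc.prems by auto
    then show ?thesis using Suc assms(2) by auto
  qed (use assms(1) in simp)
qed simp

locale fsetting =
  fixes q n r l p e :: nat and t :: "nat \<Rightarrow> nat"
    and \<alpha> \<beta> :: "'a::{finite,field}"
  assumes pp: "prime p" and e1: "e \<ge> 1" and qpe: "q = p ^ e"
    and cardq: "card (UNIV :: 'a set) = q ^ n"
    and prim: "primitive_elem \<alpha>"
    and r1: "r \<ge> 1"
    and t1: "1 \<le> t 1"
    and tinc: "\<forall>i\<in>{1..<r}. t i < t (Suc i)"
    and tn: "\<forall>i\<in>{1..r}. t i dvd n"
    and tdvd: "\<forall>i\<in>{1..<r}. t i dvd t (Suc i)"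
    and b0: "\<beta> \<noteq> 0"
    and cycb: "cyc \<beta> = cyc (\<alpha> ^ l)"

context fsetting
begin

lemma tpos: "i \<in> {1..r} \<Longrightarrow> t i \<ge> 1"
  using chain_ind[where P = "\<lambda>i. t i \<ge> 1" and r = r and i = i] t1 tinc by fastforce

lemma tdvd1: "i \<in> {1..r} \<Longrightarrow> t 1 dvd t i"
  using chain_ind[where P = "\<lambda>i. t 1 dvd t i" and r = r and i = i] tdvd by (meson dvd_refl dvd_trans)

lemma Ndef: "q ^ n - 1 = card (UNIV :: 'a set) - 1" using cardq by simp

lemma qge2: "q \<ge> 2"
proof -
  have "p \<ge> 2" using pp by (simp add: prime_ge_2_nat)
  moreover have "p ^ 1 \<le> p ^ e" using e1 pp by (intro power_increasing) (use prime_ge_1_nat[of p] in auto)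
  ultimately show ?thesis using qpe by simp
qed

lemma charp: "CHAR('a) = p"
  by (rule char_eq[OF pp, of "e * n"]) (simp add: cardq qpe power_mult)

lemma spq: "subfield_pow (q ^ m) = subfield_pow (p ^ (e * m))"
  by (simp add: qpe power_mult)

lemma K0: "(0::'a) \<in> subfield_pow q" using qge2 by (intro sp_0) simp
lemma K1: "(1::'a) \<in> subfield_pow q" by (rule sp_1)
lemma Kdiff: "x \<in> subfield_pow q \<Longrightarrow> y \<in> subfield_pow q \<Longrightarrow> (x::'a) - y \<in> subfield_pow q"
  unfolding qpe by (rule sp_diff[OF charp pp])
lemma Kmult: "x \<in> subfield_pow q \<Longrightarrow> y \<in> subfield_pow q \<Longrightarrow> (x::'a) * y \<in> subfield_pow q"
  by (rule sp_mult)
lemma Kdiv: "x \<in> subfield_pow q \<Longrightarrow> y \<in> subfield_pow q \<Longrightarrow> (x::'a) / y \<in> subfield_pow q"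
  by (rule sp_div)
lemma cardF: "m \<ge> 1 \<Longrightarrow> m dvd n \<Longrightarrow> card (subfield_pow (q ^ m) :: 'a set) = q ^ m"
  by (rule card_F[OF Ndef prim cardq]) (use qge2 in auto)
lemma Kcard': "card (subfield_pow q :: 'a set) = q"
  using cardF[of 1] by simp
lemma Kcard: "card (subfield_pow q :: 'a set) > 1"
  using Kcard' qge2 by simp

context
  fixes i assumes i: "i \<in> {1..r}"
begin

lemma F0: "(0::'a) \<in> subfield_pow (q ^ t i)" using qge2 by (intro sp_0) simp
lemma F1: "(1::'a) \<in> subfield_pow (q ^ t i)" by (rule sp_1)
lemma Fadd: "x \<in> subfield_pow (q ^ t i) \<Longrightarrow> y \<in> subfield_pow (q ^ t i) \<Longrightarrow> (x::'a) + y \<in> subfield_pow (q ^ t i)"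
  unfolding spq by (rule sp_add[OF charp pp])
lemma Fdiff: "x \<in> subfield_pow (q ^ t i) \<Longrightarrow> y \<in> subfield_pow (q ^ t i) \<Longrightarrow> (x::'a) - y \<in> subfield_pow (q ^ t i)"
  unfolding spq by (rule sp_diff[OF charp pp])
lemma Fmult: "x \<in> subfield_pow (q ^ t i) \<Longrightarrow> y \<in> subfield_pow (q ^ t i) \<Longrightarrow> (x::'a) * y \<in> subfield_pow (q ^ t i)"
  by (rule sp_mult)
lemma Fdiv: "x \<in> subfield_pow (q ^ t i) \<Longrightarrow> y \<in> subfield_pow (q ^ t i) \<Longrightarrow> (x::'a) / y \<in> subfield_pow (q ^ t i)"
  by (rule sp_div)
lemma KF: "subfield_pow q \<subseteq> (subfield_pow (q ^ t i) :: 'a set)"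
  using sp_pow_mono by blast
lemma Fcard: "card (subfield_pow (q ^ t i) :: 'a set) = card (subfield_pow q :: 'a set) ^ t i"
  using cardF[of "t i"] tpos[OF i] tn i Kcard' by simp

lemma dist_i:
  fixes g g' :: 'a
  assumes "g \<noteq> 0" "g' \<noteq> 0"
  shows "subspace_dist (subfield_pow q) ((\<lambda>u. u * g) ` subfield_pow (q ^ t i)) ((\<lambda>u. u * g') ` subfield_pow (q ^ t i))
     = (if g' / g \<in> subfield_pow (q ^ t i) then 0 else 2 * t i)"
  by (rule scaled_dist[OF K0 K1 Kdiff Kmult Kdiv Kcard F0 F1 Fadd Fdiff Fmult Fdiv KF Fcard assms])

lemma eq_i:
  fixes g g' :: 'a
  assumes "g \<noteq> 0" "g' \<noteq> 0"
  shows "(\<lambda>u. u * g) ` subfield_pow (q ^ t i) = (\<lambda>u. u * g') ` (subfield_pow (q ^ t i) :: 'a set)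
     \<longleftrightarrow> g' / g \<in> subfield_pow (q ^ t i)"
  by (rule scaled_eq_iff[OF K0 K1 Kdiff Kmult Kdiv Kcard F0 F1 Fadd Fdiff Fmult Fdiv KF Fcard assms])

lemma F1_sub: "subfield_pow (q ^ t 1) \<subseteq> (subfield_pow (q ^ t i) :: 'a set)"
proof
  fix x :: 'a assume "x \<in> subfield_pow (q ^ t 1)"
  then have "x \<in> subfield_pow ((q ^ t 1) ^ (t i div t 1))" by (rule sp_pow_mono)
  moreover have "(q ^ t 1) ^ (t i div t 1) = q ^ t i"
    using tdvd1[OF i] by (simp add: power_mult[symmetric])
  ultimately show "x \<in> subfield_pow (q ^ t i)" by simp
qed

end

end


context fsetting
begin

abbreviation "Fl \<equiv> map (\<lambda>i. subfield_pow (q ^ t i) :: 'a set) [1..<Suc r]"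
abbreviation "LL i \<equiv> lcm l ((q ^ n - 1) div (q ^ t i - 1))"
definition "vall k = (\<Sum>i\<in>{1..r}. if LL i dvd l * k then 0 else 2 * t i)"

lemma map_upt_nth: "i < r \<Longrightarrow> map f [1..<Suc r] ! i = f (Suc i)"
  by (simp del: upt_Suc add: nth_map)

lemma fdist:
  fixes g g' :: 'a
  assumes "g \<noteq> 0" "g' \<noteq> 0"
  shows "flag_dist (subfield_pow q) (flag_scale Fl g) (flag_scale Fl g')
     = (\<Sum>i\<in>{1..r}. if g' / g \<in> subfield_pow (q ^ t i) then 0 else 2 * t i)"
proof -
  have "flag_dist (subfield_pow q) (flag_scale Fl g) (flag_scale Fl g')
      = (\<Sum>i<r. subspace_dist (subfield_pow q) ((\<lambda>u. u * g) ` subfield_pow (q ^ t (Suc i)))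
            ((\<lambda>u. u * g') ` subfield_pow (q ^ t (Suc i))))"
    unfolding flag_dist_def flag_scale_def by (intro sum.cong) (auto simp del: upt_Suc simp: map_upt_nth)
  also have "\<dots> = (\<Sum>i<r. if g' / g \<in> subfield_pow (q ^ t (Suc i)) then 0 else 2 * t (Suc i))"
    by (intro sum.cong refl dist_i assms) auto
  also have "\<dots> = (\<Sum>i\<in>Suc ` {..<r}. if g' / g \<in> subfield_pow (q ^ t i) then 0 else 2 * t i)"
    by (subst sum.reindex) auto
  also have "Suc ` {..<r} = {1..r}" by (simp add: image_Suc_lessThan)
  finally show ?thesis .
qed

lemma feq:
  fixes g g' :: 'a
  assumes "g \<noteq> 0" "g' \<noteq> 0"
  shows "flag_scale Fl g = flag_scale Fl g' \<longleftrightarrow> g' / g \<in> subfield_pow (q ^ t 1)"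
proof
  assume "flag_scale Fl g = flag_scale Fl g'"
  then have "flag_scale Fl g ! 0 = flag_scale Fl g' ! 0" by simp
  then have "(\<lambda>u. u * g) ` subfield_pow (q ^ t 1) = (\<lambda>u. u * g') ` (subfield_pow (q ^ t 1) :: 'a set)"
    using r1 unfolding flag_scale_def by (simp del: upt_Suc add: map_upt_nth)
  then show "g' / g \<in> subfield_pow (q ^ t 1)" using eq_i[of 1] r1 assms by simp
next
  assume d: "g' / g \<in> subfield_pow (q ^ t 1)"
  show "flag_scale Fl g = flag_scale Fl g'"
    unfolding flag_scale_def
  proof (intro nth_equalityI)
    fix j assume "j < length (map (\<lambda>U. (\<lambda>u. u * g) ` U) Fl)"
    then have j: "j < r" by (simp del: upt_Suc)
    have ji: "Suc j \<in> {1..r}" using j by simp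
    have "g' / g \<in> subfield_pow (q ^ t (Suc j))" using F1_sub[OF ji] d by blast
    then have "(\<lambda>u. u * g) ` subfield_pow (q ^ t (Suc j)) = (\<lambda>u. u * g') ` (subfield_pow (q ^ t (Suc j)) :: 'a set)"
      using eq_i[OF ji assms] by simp
    then show "map (\<lambda>U. (\<lambda>u. u * g) ` U) Fl ! j = map (\<lambda>U. (\<lambda>u. u * g') ` U) Fl ! j"
      using j by (simp del: upt_Suc add: map_upt_nth)
  qed simp
qed

lemma orbit_eq: "orbit_flag \<beta> Fl = flag_scale Fl ` cyc \<beta>"
proof -
  have ex: "\<exists>k. k > 0 \<and> \<beta> ^ k = 1"
  proof (intro exI conjI)
    show "\<beta> ^ (card (UNIV :: 'a set) - 1) = 1" using fermat_fin[OF b0] .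
    show "(card (UNIV :: 'a set) - 1) > 0" using Npos[OF refl prim] .
  qed
  define m where "m = mord \<beta>"
  have m: "m > 0" "\<beta> ^ m = 1" using LeastI_ex[OF ex] unfolding m_def mord_def by auto
  have "cyc \<beta> = {\<beta> ^ j | j. j \<le> m - 1}"
  proof
    show "{\<beta> ^ j | j. j \<le> m - 1} \<subseteq> cyc \<beta>" unfolding cyc_def by auto
    show "cyc \<beta> \<subseteq> {\<beta> ^ j | j. j \<le> m - 1}"
    proof
      fix x assume "x \<in> cyc \<beta>"
      then obtain k where k: "x = \<beta> ^ k" unfolding cyc_def by auto
      have "\<beta> ^ k = \<beta> ^ (m * (k div m) + k mod m)" by simp
      also have "\<dots> = \<beta> ^ (k mod m)" by (simp only: power_add power_mult m(2) power_one mult_1)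
      finally have "x = \<beta> ^ (k mod m)" using k by simp
      moreover have "k mod m \<le> m - 1" using m(1) by (metis Suc_pred' less_Suc_eq_le mod_less_divisor)
      ultimately show "x \<in> {\<beta> ^ j | j. j \<le> m - 1}" by blast
    qed
  qed
  then show ?thesis unfolding orbit_flag_def m_def by auto
qed

lemma cyc_al: "cyc (\<alpha> ^ l) = range (\<lambda>k. \<alpha> ^ (l * k))"
  unfolding cyc_def by (auto simp: power_mult)

lemma quot:
  "\<alpha> ^ (l * b) / \<alpha> ^ (l * a) = \<alpha> ^ (l * (b + a * ((card (UNIV :: 'a set) - 1) - 1)))"
proof -
  have a0: "\<alpha> ^ (l * a) \<noteq> 0" using alpha_ne0[OF refl prim] by simp
  have Npos': "(card (UNIV :: 'a set) - 1) > 0" using Npos[OF refl prim] .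
  have "\<alpha> ^ (l * a) * \<alpha> ^ (l * (b + a * ((card (UNIV :: 'a set) - 1) - 1))) = \<alpha> ^ (l * b) * \<alpha> ^ (l * a * (card (UNIV :: 'a set) - 1))"
  proof -
    obtain M' where M': "card (UNIV :: 'a set) - 1 = Suc M'" using Npos' by (cases "card (UNIV :: 'a set) - 1") auto
    have "l * a + l * (b + a * ((card (UNIV :: 'a set) - 1) - 1)) = l * b + l * a * (card (UNIV :: 'a set) - 1)"
      unfolding M' by (simp add: algebra_simps)
    then show ?thesis by (simp flip: power_add)
  qed
  also have "\<alpha> ^ (l * a * (card (UNIV :: 'a set) - 1)) = 1"
  proof -
    have "\<alpha> ^ (l * a * (card (UNIV :: 'a set) - 1)) = (\<alpha> ^ (card (UNIV :: 'a set) - 1)) ^ (l * a)"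
      by (simp only: power_mult[symmetric] mult.commute)
    then show ?thesis using alpha_N[OF refl prim] by simp
  qed
  finally show ?thesis using a0 by (simp add: field_simps)
qed

lemma mem_L:
  assumes "i \<in> {1..r}"
  shows "\<alpha> ^ (l * k) \<in> subfield_pow (q ^ t i) \<longleftrightarrow> LL i dvd l * k"
proof -
  have "\<alpha> ^ (l * k) \<in> subfield_pow (q ^ t i) \<longleftrightarrow> ((card (UNIV :: 'a set) - 1) div (q ^ t i - 1)) dvd l * k"
    by (rule mem_F[OF refl prim cardq]) (use tn assms qge2 tpos in auto)
  then show ?thesis using Ndef by (simp add: lcm_least_iff)
qed

lemma pair_facts:
  "flag_dist (subfield_pow q) (flag_scale Fl (\<alpha> ^ (l * a))) (flag_scale Fl (\<alpha> ^ (l * b)))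
     = vall (b + a * ((card (UNIV :: 'a set) - 1) - 1))"
  "flag_scale Fl (\<alpha> ^ (l * a)) = flag_scale Fl (\<alpha> ^ (l * b)) \<longleftrightarrow> LL 1 dvd l * (b + a * ((card (UNIV :: 'a set) - 1) - 1))"
proof -
  have nz: "\<alpha> ^ (l * x) \<noteq> 0" for x using alpha_ne0[OF refl prim] by simp
  show "flag_dist (subfield_pow q) (flag_scale Fl (\<alpha> ^ (l * a))) (flag_scale Fl (\<alpha> ^ (l * b)))
     = vall (b + a * ((card (UNIV :: 'a set) - 1) - 1))"
    unfolding fdist[OF nz nz] quot vall_def by (intro sum.cong refl) (simp add: mem_L)
  show "flag_scale Fl (\<alpha> ^ (l * a)) = flag_scale Fl (\<alpha> ^ (l * b)) \<longleftrightarrow> LL 1 dvd l * (b + a * ((card (UNIV :: 'a set) - 1) - 1))"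
    unfolding feq[OF nz nz] quot using mem_L[of 1] r1 by simp
qed

lemma d_formula:
  "min_flag_dist (subfield_pow q) (orbit_flag \<beta> Fl)
     = (if \<forall>k. LL 1 dvd l * k then 0 else Min {vall k | k. \<not> LL 1 dvd l * k})"
proof -
  let ?fs = "\<lambda>k. flag_scale Fl (\<alpha> ^ (l * k))"
  have C: "orbit_flag \<beta> Fl = range ?fs"
    unfolding orbit_eq cycb cyc_al by auto
  show ?thesis
  proof (cases "\<forall>k. LL 1 dvd l * k")
    case True
    have "?fs k = ?fs 0" for k using pair_facts(2)[of k 0] True by simp
    then have "range ?fs = {?fs 0}" by auto
    then show ?thesis unfolding min_flag_dist_def C using True by simp
  next
    case False
    then obtain k0 where k0: "\<not> LL 1 dvd l * k0" by blast
    have ne: "?fs 0 \<noteq> ?fs k0" using pair_facts(2)[of 0 k0] k0 by simp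
    have "card (range ?fs) \<noteq> 1"
    proof
      assume "card (range ?fs) = 1"
      then obtain x where "range ?fs = {x}" by (meson card_1_singletonE)
      then have "?fs 0 = x" "?fs k0 = x" by (metis rangeI singletonD)+
      then show False using ne by simp
    qed
    moreover have "{flag_dist (subfield_pow q) A B | A B. A \<in> range ?fs \<and> B \<in> range ?fs \<and> A \<noteq> B}
        = {vall k | k. \<not> LL 1 dvd l * k}"
    proof
      show "{flag_dist (subfield_pow q) A B | A B. A \<in> range ?fs \<and> B \<in> range ?fs \<and> A \<noteq> B}
        \<subseteq> {vall k | k. \<not> LL 1 dvd l * k}"
      proof
        fix x assume "x \<in> {flag_dist (subfield_pow q) A B | A B. A \<in> range ?fs \<and> B \<in> range ?fs \<and> A \<noteq> B}"
        then obtain a b where "x = flag_dist (subfield_pow q) (?fs a) (?fs b)" "?fs a \<noteq> ?fs b" by auto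
        then show "x \<in> {vall k | k. \<not> LL 1 dvd l * k}"
          using pair_facts[of a b] by auto
      qed
      show "{vall k | k. \<not> LL 1 dvd l * k} \<subseteq>
         {flag_dist (subfield_pow q) A B | A B. A \<in> range ?fs \<and> B \<in> range ?fs \<and> A \<noteq> B}"
      proof
        fix x assume "x \<in> {vall k | k. \<not> LL 1 dvd l * k}"
        then obtain k where k: "x = vall k" "\<not> LL 1 dvd l * k" by auto
        have "x = flag_dist (subfield_pow q) (?fs 0) (?fs k)" "?fs 0 \<noteq> ?fs k"
          using pair_facts[of 0 k] k by auto
        then show "x \<in> {flag_dist (subfield_pow q) A B | A B. A \<in> range ?fs \<and> B \<in> range ?fs \<and> A \<noteq> B}"
          by blast
      qed
    qed
    ultimately have "min_flag_dist (subfield_pow q) (range ?fs) = Min {vall k | k. \<not> LL 1 dvd l * k}"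
      unfolding min_flag_dist_def by (simp only: if_False)
    then show ?thesis unfolding C by (simp only: if_not_P[OF False])
  qed
qed

end


context fsetting
begin

lemma div_dvd_div':
  fixes a b N :: nat
  assumes "a dvd b" "b dvd N" "b > 0"
  shows "N div b dvd N div a"
proof -
  obtain x where x: "N = b * x" using assms(2) by blast
  obtain y where y: "b = a * y" using assms(1) by blast
  have "N div b = x" using x assms(3) by simp
  moreover have "N div a = y * x" using x y assms(3) by (cases "a = 0") (auto simp: mult.assoc)
  ultimately show ?thesis by simp
qed

lemma LL_step:
  assumes "i \<in> {1..<r}"
  shows "LL (Suc i) dvd LL i"
proof -
  have i1: "i \<in> {1..r}" and i2: "Suc i \<in> {1..r}" using assms by auto
  have "q ^ t i - 1 dvd q ^ t (Suc i) - 1"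
    using pow_sub1_dvd'[of q "t i" "t (Suc i)"] qge2 tdvd assms by auto
  moreover have "q ^ t (Suc i) - 1 dvd q ^ n - 1"
    using pow_sub1_dvd'[of q "t (Suc i)" n] qge2 tn i2 by auto
  moreover have "q ^ t (Suc i) - 1 > 0" using qt_pos[OF refl prim cardq _ qge2] tn i2 tpos[OF i2] by auto
  ultimately have "(q ^ n - 1) div (q ^ t (Suc i) - 1) dvd (q ^ n - 1) div (q ^ t i - 1)"
    by (rule div_dvd_div')
  then show ?thesis by (meson dvd_lcm1 dvd_lcm2 dvd_trans lcm_least)
qed

lemma LL_chain:
  assumes "i \<in> {1..r}" "j \<in> {1..r}" "i \<le> j"
  shows "LL j dvd LL i"
proof -
  have "\<forall>j. i \<le> j \<longrightarrow> j \<le> r \<longrightarrow> LL j dvd LL i"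
  proof (intro allI)
    fix j show "i \<le> j \<longrightarrow> j \<le> r \<longrightarrow> LL j dvd LL i"
    proof (induction j)
      case (Suc j)
      show ?case
      proof (intro impI)
        assume a: "i \<le> Suc j" "Suc j \<le> r"
        show "LL (Suc j) dvd LL i"
        proof (cases "i = Suc j")
          case False
          then have "i \<le> j" using a by simp
          then have "LL j dvd LL i" using Suc a by simp
          moreover have "j \<in> {1..<r}" using a \<open>i \<le> j\<close> assms(1) by auto
          ultimately show ?thesis using LL_step dvd_trans by blast
        qed simp
      qed
    qed simp
  qed
  then show ?thesis using assms by auto
qed

definition "SS j = (\<Sum>i=1..<j. t i)"

lemma SS_less:
  assumes "1 \<le> a" "a < b" "b \<le> Suc r"
  shows "SS a < SS b"
proof -
  have "SS b = SS a + (\<Sum>i=a..<b. t i)"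
    unfolding SS_def using assms by (simp add: sum.atLeastLessThan_concat)
  moreover have "t a \<le> (\<Sum>i=a..<b. t i)" using assms by (intro member_le_sum) auto
  moreover have "t a \<ge> 1" using tpos assms by auto
  ultimately show ?thesis by simp
qed

lemma SS_all: "SS (Suc r) = (\<Sum>i=1..r. t i)"
  unfolding SS_def by (simp add: atLeastLessThanSuc_atLeastAtMost)

lemma SS_pos: "2 \<le> j \<Longrightarrow> j \<le> Suc r \<Longrightarrow> SS j > 0"
  using SS_less[of 1 j] by (simp add: SS_def)

lemma vall_bound: "vall k \<le> 2 * SS (Suc r)"
proof -
  have "vall k \<le> (\<Sum>i\<in>{1..r}. 2 * t i)" unfolding vall_def by (intro sum_mono) auto
  then show ?thesis unfolding SS_all by (simp add: sum_distrib_left)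
qed

lemma Min_val:
  assumes "v \<in> S" "\<And>x. x \<in> S \<Longrightarrow> v \<le> x" "S \<subseteq> {..B}"
  shows "Min S = (v::nat)"
  using assms by (intro Min_eqI) (auto intro: finite_subset)

lemma d_cases:
  assumes ldvd: "l dvd q ^ n - 1"
  defines "J \<equiv> {j \<in> {2..r}. LL j \<noteq> LL 1}"
  shows "min_flag_dist (subfield_pow q) (orbit_flag \<beta> Fl)
     = (if LL 1 = l then 0 else if J = {} then 2 * SS (Suc r) else 2 * SS (Min J))"
proof -
  have "q ^ n - 1 > 0" using Ndef Npos[OF refl prim] by simp
  then have lpos: "l > 0" using ldvd by (cases "l = 0") auto
  have lL: "l dvd LL i" for i by simp
  have S_sub: "{vall k | k. \<not> LL 1 dvd l * k} \<subseteq> {..2 * SS (Suc r)}" using vall_bound by auto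
  have allk: "(\<forall>k. LL 1 dvd l * k) \<longleftrightarrow> LL 1 = l"
  proof
    assume "\<forall>k. LL 1 dvd l * k"
    then have "LL 1 dvd l" by (metis mult_1_right)
    then show "LL 1 = l" using lL[of 1] by (simp add: dvd_antisym)
  qed auto
  have r1': "1 \<in> {1..r}" using r1 by simp
  show ?thesis
  proof (cases "LL 1 = l")
    case True
    then show ?thesis unfolding d_formula using allk by simp
  next
    case False
    then have dF: "min_flag_dist (subfield_pow q) (orbit_flag \<beta> Fl) = Min {vall k | k. \<not> LL 1 dvd l * k}"
    proof -
      have nall: "\<not> (\<forall>k. LL 1 dvd l * k)" using allk False by simp
      show ?thesis unfolding d_formula by (rule if_not_P[OF nall])
    qed
    show ?thesis
    proof (cases "J = {}")
      case True
      then have eqL: "LL i = LL 1" if "i \<in> {1..r}" for i using that unfolding J_def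
        by (cases "i = 1") auto
      have val_all: "vall k = 2 * SS (Suc r)" if "\<not> LL 1 dvd l * k" for k
      proof -
        have "vall k = (\<Sum>i\<in>{1..r}. 2 * t i)"
          unfolding vall_def
        proof (intro sum.cong refl)
          fix i assume "i \<in> {1..r}"
          then have "LL i = LL 1" by (rule eqL)
          then show "(if LL i dvd l * k then 0 else 2 * t i) = 2 * t i" using that by simp
        qed
        then show ?thesis unfolding SS_all by (simp add: sum_distrib_left)
      qed
      have n1: "\<not> LL 1 dvd l * 1" using False lL[of 1] by (simp add: dvd_antisym)
      have "Min {vall k | k. \<not> LL 1 dvd l * k} = 2 * SS (Suc r)"
        by (rule Min_val[OF _ _ S_sub]) (use val_all n1 in \<open>auto intro!: exI[of _ 1]\<close>)
      then show ?thesis using dF False True by simp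
    next
      case Jne: False
      define m where "m = Min J"
      have fJ: "finite J" unfolding J_def by simp
      have mJ: "m \<in> J" unfolding m_def using fJ Jne by (rule Min_in)
      have mlow: "\<And>j. j \<in> J \<Longrightarrow> m \<le> j" unfolding m_def using fJ by simp
      have m2: "m \<in> {2..r}" "LL m \<noteq> LL 1" using mJ unfolding J_def by auto
      have below: "LL i = LL 1" if "i \<in> {1..<m}" for i
      proof (rule ccontr)
        assume "LL i \<noteq> LL 1"
        moreover have "i \<noteq> 1" using \<open>LL i \<noteq> LL 1\<close> by auto
        ultimately have "i \<in> J" using that m2 unfolding J_def by auto
        then show False using mlow that by fastforce
      qed
      have lower: "2 * SS m \<le> vall k" if "\<not> LL 1 dvd l * k" for k
      proof -
        have "2 * SS m = (\<Sum>i\<in>{1..<m}. if LL i dvd l * k then 0 else 2 * t i)"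
          unfolding SS_def sum_distrib_left
        proof (intro sum.cong refl)
          fix i assume "i \<in> {1..<m}"
          then have "LL i = LL 1" by (rule below)
          then show "2 * t i = (if LL i dvd l * k then 0 else 2 * t i)" using that by simp
        qed
        also have "\<dots> \<le> vall k" unfolding vall_def using m2 by (intro sum_mono2) auto
        finally show ?thesis .
      qed
      define k0 where "k0 = LL m div l"
      have lk0: "l * k0 = LL m" unfolding k0_def using lL[of m] by simp
      have m1: "m \<in> {1..r}" using m2 by auto
      have nd: "\<not> LL 1 dvd l * k0"
      proof
        assume "LL 1 dvd l * k0"
        then have "LL 1 dvd LL m" using lk0 by simp
        moreover have "LL m dvd LL 1" using LL_chain[OF r1' m1] m2 by auto
        ultimately show False using m2 by (simp add: dvd_antisym)
      qed
      have vk0: "vall k0 = 2 * SS m"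
      proof -
        have "vall k0 = (\<Sum>i\<in>{1..r}. if i < m then 2 * t i else 0)"
          unfolding vall_def
        proof (intro sum.cong refl)
          fix i assume i: "i \<in> {1..r}"
          show "(if LL i dvd l * k0 then 0 else 2 * t i) = (if i < m then 2 * t i else 0)"
          proof (cases "i < m")
            case True
            then have "LL i = LL 1" using i by (intro below) auto
            then show ?thesis using nd True by simp
          next
            case False
            then have "LL i dvd LL m" using LL_chain[OF m1 i] by simp
            then show ?thesis using False lk0 by simp
          qed
        qed
        also have "\<dots> = (\<Sum>i\<in>{1..<m}. 2 * t i)"
          using m2 by (intro sum.mono_neutral_cong_right) auto
        finally show ?thesis unfolding SS_def sum_distrib_left .
      qed
      have "Min {vall k | k. \<not> LL 1 dvd l * k} = 2 * SS m"
        by (rule Min_val[OF _ _ S_sub]) (use vk0 nd lower in \<open>auto intro!: exI[of _ k0]\<close>)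
      then show ?thesis using dF False Jne m_def by simp
    qed
  qed
qed

end


theorem theorem4p15:
  fixes q n r l :: nat and t :: "nat \<Rightarrow> nat"
    and \<alpha> \<beta> :: "'a::{finite,field}"
  assumes "prime_power q"
    and "card (UNIV :: 'a set) = q ^ n"
    and "primitive_elem \<alpha>"
    and "r \<ge> 1"
    and "1 \<le> t 1"
    and "\<forall>i\<in>{1..<r}. t i < t (Suc i)"
    and "t r < n"
    and "\<forall>i\<in>{1..r}. t i dvd n"
    and "\<forall>i\<in>{1..<r}. t i dvd t (Suc i)"
    and "\<beta> \<noteq> 0"
    and "l dvd q ^ n - 1"
    and "cyc \<beta> = cyc (\<alpha> ^ l)"
  defines "L \<equiv> (\<lambda>i. lcm l ((q ^ n - 1) div (q ^ t i - 1)))"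
    and "d \<equiv> min_flag_dist (subfield_pow q) (orbit_flag \<beta> (map (\<lambda>i. subfield_pow (q ^ t i)) [1..<Suc r]))"
  shows "(d = 0 \<longleftrightarrow> L 1 = l \<and> L r = l)
    \<and> (d = 2 * (\<Sum>i=1..r. t i) \<longleftrightarrow> L 1 = L r \<and> L r \<noteq> l)
    \<and> (\<forall>j\<in>{2..r}. d = 2 * (\<Sum>i=1..<j. t i) \<longleftrightarrow>
          (L 1 \<noteq> L r \<and> L 1 \<noteq> L j \<and> (\<forall>k\<in>{2..<j}. L 1 = L k)))"
proof -
  obtain p e where pe: "prime p" "e \<ge> 1" "q = p ^ e"
    using assms(1) unfolding prime_power_def by blast
  interpret fs: fsetting q n r l p e t \<alpha> \<beta>
    using pe assms(2-6) assms(8-10) assms(12) by unfold_locales auto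
  define J where "J = {j \<in> {2..r}. L j \<noteq> L 1}"
  have dc: "d = (if L 1 = l then 0 else if J = {} then 2 * fs.SS (Suc r) else 2 * fs.SS (Min J))"
    unfolding d_def J_def L_def by (rule fs.d_cases[OF assms(11)])
  have r1': "1 \<in> {1..r}" using assms(4) by simp
  have chain: "i \<in> {1..r} \<Longrightarrow> j \<in> {1..r} \<Longrightarrow> i \<le> j \<Longrightarrow> L j dvd L i" for i j
    unfolding L_def by (rule fs.LL_chain)
  have lL: "l dvd L i" for i unfolding L_def by simp
  have JE: "L 1 = L r \<longleftrightarrow> J = {}"
  proof
    assume e: "L 1 = L r"
    show "J = {}"
    proof (rule ccontr)
      assume "J \<noteq> {}"
      then obtain j where j: "j \<in> {2..r}" "L j \<noteq> L 1" unfolding J_def by auto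
      have "L j dvd L 1" using chain[OF r1', of j] j by auto
      moreover have "L r dvd L j" using chain[of j r] j by auto
      ultimately show False using e j by (simp add: dvd_antisym)
    qed
  next
    assume "J = {}"
    then show "L 1 = L r" unfolding J_def using assms(4) by (cases "r = 1") auto
  qed
  have LA: "L 1 = l \<Longrightarrow> L r = l"
  proof -
    assume "L 1 = l"
    moreover have "L r dvd L 1" using chain[OF r1', of r] assms(4) by auto
    ultimately show "L r = l" using lL[of r] by (simp add: dvd_antisym)
  qed
  have SSall: "(\<Sum>i=1..r. t i) = fs.SS (Suc r)" by (simp add: fs.SS_all)
  have SSj: "(\<Sum>i=1..<j. t i) = fs.SS j" for j by (simp add: fs.SS_def)
  have Sless: "1 \<le> a \<Longrightarrow> a < b \<Longrightarrow> b \<le> Suc r \<Longrightarrow> fs.SS a < fs.SS b" for a b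
    by (rule fs.SS_less)
  have Sinj: "a \<in> {1..Suc r} \<Longrightarrow> b \<in> {1..Suc r} \<Longrightarrow> fs.SS a = fs.SS b \<Longrightarrow> a = b" for a b
    using Sless[of a b] Sless[of b a] by (cases a b rule: linorder_cases) auto
  have Spos: "2 \<le> j \<Longrightarrow> j \<le> Suc r \<Longrightarrow> fs.SS j > 0" for j by (rule fs.SS_pos)
  have fJ: "finite J" unfolding J_def by simp
  have RHS3: "(L 1 \<noteq> L r \<and> L 1 \<noteq> L j \<and> (\<forall>k\<in>{2..<j}. L 1 = L k)) \<longleftrightarrow> (J \<noteq> {} \<and> j = Min J)"
    if j: "j \<in> {2..r}" for j
  proof
    assume a: "L 1 \<noteq> L r \<and> L 1 \<noteq> L j \<and> (\<forall>k\<in>{2..<j}. L 1 = L k)"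
    have jJ: "j \<in> J" using a j unfolding J_def by auto
    have "\<forall>k\<in>J. j \<le> k"
    proof
      fix k assume kJ: "k \<in> J"
      show "j \<le> k"
      proof (rule ccontr)
        assume "\<not> j \<le> k"
        then have "k \<in> {2..<j}" using kJ unfolding J_def by auto
        then have "L 1 = L k" using a by blast
        then show False using kJ unfolding J_def by simp
      qed
    qed
    then show "J \<noteq> {} \<and> j = Min J" using jJ fJ by (intro conjI) (auto intro: Min_eqI[symmetric])
  next
    assume a: "J \<noteq> {} \<and> j = Min J"
    have jJ: "j \<in> J" using a fJ Min_in by blast
    have "\<forall>k\<in>{2..<j}. L 1 = L k"
    proof
      fix k assume k: "k \<in> {2..<j}"
      show "L 1 = L k"
      proof (rule ccontr)
        assume "L 1 \<noteq> L k"
        then have "k \<in> J" using k j unfolding J_def by auto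
        then have "j \<le> k" using a fJ by simp
        then show False using k by simp
      qed
    qed
    moreover have "L 1 \<noteq> L r" using JE a by blast
    moreover have "L 1 \<noteq> L j" using jJ unfolding J_def by simp
    ultimately show "L 1 \<noteq> L r \<and> L 1 \<noteq> L j \<and> (\<forall>k\<in>{2..<j}. L 1 = L k)"
      by blast
  qed
  show ?thesis
  proof (cases "L 1 = l")
    case A: True
    have J0: "J = {}" using A LA JE by simp
    have d0: "d = 0" using dc A by simp
    show ?thesis
    proof (intro conjI ballI)
      show "(d = 0) = (L 1 = l \<and> L r = l)" using d0 A LA by simp
      show "(d = 2 * (\<Sum>i = 1..r. t i)) = (L 1 = L r \<and> L r \<noteq> l)"
        using d0 A LA Spos[of "Suc r"] assms(4) SSall by simp
      fix j assume j: "j \<in> {2..r}"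
      show "(d = 2 * (\<Sum>i = 1..<j. t i)) = (L 1 \<noteq> L r \<and> L 1 \<noteq> L j \<and> (\<forall>k\<in>{2..<j}. L 1 = L k))"
        using RHS3[OF j] J0 d0 Spos[of j] j SSj[of j] by auto
    qed
  next
    case nA: False
    show ?thesis
    proof (cases "J = {}")
      case B: True
      have dB: "d = 2 * fs.SS (Suc r)" using dc nA B by simp
      show ?thesis
      proof (intro conjI ballI)
        show "(d = 0) = (L 1 = l \<and> L r = l)" using dB nA Spos[of "Suc r"] assms(4) by simp
        show "(d = 2 * (\<Sum>i = 1..r. t i)) = (L 1 = L r \<and> L r \<noteq> l)"
          using dB nA B JE SSall by simp
        fix j assume j: "j \<in> {2..r}"
        have "fs.SS j \<noteq> fs.SS (Suc r)" using Sinj[of j "Suc r"] j by auto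
        then show "(d = 2 * (\<Sum>i = 1..<j. t i)) = (L 1 \<noteq> L r \<and> L 1 \<noteq> L j \<and> (\<forall>k\<in>{2..<j}. L 1 = L k))"
          using RHS3[OF j] B dB SSj[of j] by auto
      qed
    next
      case C: False
      define m where "m = Min J"
      have mJ: "m \<in> J" unfolding m_def using fJ C by (rule Min_in)
      have m2: "m \<in> {2..r}" using mJ unfolding J_def by auto
      have dC: "d = 2 * fs.SS m" using dc nA C m_def by simp
      show ?thesis
      proof (intro conjI ballI)
        show "(d = 0) = (L 1 = l \<and> L r = l)" using dC nA Spos[of m] m2 by simp
        have "fs.SS m \<noteq> fs.SS (Suc r)" using Sinj[of m "Suc r"] m2 by auto
        then show "(d = 2 * (\<Sum>i = 1..r. t i)) = (L 1 = L r \<and> L r \<noteq> l)"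
          using dC C JE SSall by simp
        fix j assume j: "j \<in> {2..r}"
        have "fs.SS m = fs.SS j \<longleftrightarrow> m = j" using Sinj[of m j] m2 j by auto
        then show "(d = 2 * (\<Sum>i = 1..<j. t i)) = (L 1 \<noteq> L r \<and> L 1 \<noteq> L j \<and> (\<forall>k\<in>{2..<j}. L 1 = L k))"
          using RHS3[OF j] C dC SSj[of j] m_def by auto
      qed
    qed
  qed
qed

end
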